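(* Let $n\ge2$, let $(b_n,\ldots,b_1)$ be a restricted sequence of length $n$ and $(a_{n-1},\ldots,a_1)$ a restricted sequence of length $n-1$, and let $j$ be a positive integer with $j\le b_n-2<a_{n-1}$. Then $\langle e_{(b_n,\ldots,b_1)},e'_{(j,a_{n-1},\ldots,a_1)}\rangle_n=0$.
   Context: $D_n$: non-crossing perfect matchings of $\{1,\ldots,2n\}$ (non-crossing arcs in the upper half-plane with endpoints $1,\ldots,2n$), $D_0=\{\phi\}$. For $1\le k\le 2n+1$, $l_k:D_n\to D_{n+1}$: $l_k(\alpha)$ matches $k$ with $k+1$, old point $i$ becomes $i$ if $i<k$ and $i+2$ if $i\ge k$. Restricted sequence of $\alpha\in D_n$: let $k_n$ be the smallest $k$ with $k$ matched to $k+1$; it is $(k_n,k_{n-1},\ldots,k_1)$ with $(k_{n-1},\ldots,k_1)$ the restricted sequence of $\alpha$ with that arc removed (empty for $\phi$). This is a bijection from $D_n$ to restricted sequences of length $n$ (these are the positive integer sequences with $k_1=1$, $k_{i+1}\le k_i+1$); $e_{(a_n,\ldots,a_1)}$ denotes the corresponding diagram. $V_n$: $\mathbb{Q}(q)$-vector space with basis $D_n$ ($q$ an indeterminate), $l_k$ extended linearly. Markov form: bilinear extension of $\langle\alpha,\beta\rangle_n=q^c$, $c$ the number of closed curves obtained by gluing $\alpha$ to the reflection of $\beta$ in the lower half-plane along $1,\ldots,2n$. $\Delta_{-1}=0$, $\Delta_0=1$, $\Delta_k=q\Delta_{k-1}-\Delta_{k-2}$. $e'$: $e'_{(1)}=e_{(1)}$;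 for $n\ge2$, $e'_{(a_n,\ldots,a_1)}=l_{a_n}(e'_{(a_{n-1},\ldots,a_1)})-\frac{\Delta_{a_n-2}}{\Delta_{a_n-1}}e'_{(a_n-1,a_{n-1},\ldots,a_1)}$ if $a_n\ge2$, and $e'_{(1,a_{n-1},\ldots,a_1)}=l_1(e'_{(a_{n-1},\ldots,a_1)})$. *)

theory Defs
  imports "HOL-Computational_Algebra.Polynomial" "HOL-Computational_Algebra.Fraction_Field"
begin

type_synonym qf = "rat poly fract"

definition qq :: qf where "qq = Fract [:0, 1:] 1"

text \<open>A diagram on points 1..2n is a list d of length 2n; the partner of point i is d ! (i-1).\<close>
definition partner :: "nat list \<Rightarrow> nat \<Rightarrow> nat" where
  "partner d i = d ! (i - 1)"

definition is_diagram :: "nat \<Rightarrow> nat list \<Rightarrow> bool" where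
  "is_diagram n d \<longleftrightarrow> length d = 2 * n \<and>
     (\<forall>i\<in>{1..2*n}. partner d i \<in> {1..2*n} \<and> partner d i \<noteq> i \<and> partner d (partner d i) = i) \<and>
     (\<forall>a\<in>{1..2*n}. \<forall>b\<in>{1..2*n}. \<not> (a < b \<and> b < partner d a \<and> partner d a < partner d b))"

definition D :: "nat \<Rightarrow> nat list set" where
  "D n = {d. is_diagram n d}"

definition shift :: "nat \<Rightarrow> nat \<Rightarrow> nat" where
  "shift k i = (if i < k then i else i + 2)"

definition unshift :: "nat \<Rightarrow> nat \<Rightarrow> nat" where
  "unshift k j = (if j < k then j else j - 2)"

definition lk :: "nat \<Rightarrow> nat list \<Rightarrow> nat list" where
  "lk k d = map (\<lambda>j. if j = k then k + 1 else if j = k + 1 then k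
                     else shift k (partner d (unshift k j))) [1..<length d + 3]"

text \<open>Removing the arc (k,k+1) (inverse of l_k).\<close>
definition remarc :: "nat \<Rightarrow> nat list \<Rightarrow> nat list" where
  "remarc k d = map (\<lambda>j. unshift k (partner d (shift k j))) [1..<length d - 1]"

primrec rseq_aux :: "nat \<Rightarrow> nat list \<Rightarrow> nat list" where
  "rseq_aux 0 d = []"
| "rseq_aux (Suc m) d =
     (let k = (LEAST k. 1 \<le> k \<and> partner d k = k + 1) in k # rseq_aux m (remarc k d))"

text \<open>Restricted sequence (k_n, ..., k_1) of a diagram, as the list [k_n, ..., k_1].\<close>
definition rseq :: "nat list \<Rightarrow> nat list" where
  "rseq d = rseq_aux (length d div 2) d"

definition restricted :: "nat \<Rightarrow> nat list \<Rightarrow> bool" where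
  "restricted n s \<longleftrightarrow> (\<exists>d\<in>D n. rseq d = s)"

definition e :: "nat list \<Rightarrow> nat list" where
  "e s = (THE d. d \<in> D (length s) \<and> rseq d = s)"

text \<open>Vectors of V_n: coefficient functions on diagrams (supported on D_n).\<close>
type_synonym vec = "nat list \<Rightarrow> qf"

definition ind :: "nat list \<Rightarrow> vec" where
  "ind d = (\<lambda>x. if x = d then 1 else 0)"

text \<open>Linear extension of l_k.\<close>
definition Lk :: "nat \<Rightarrow> vec \<Rightarrow> vec" where
  "Lk k v = (\<lambda>\<beta>. \<Sum>\<alpha>\<in>{\<alpha>\<in>D (length \<beta> div 2 - 1). lk k \<alpha> = \<beta>}. v \<alpha>)"

text \<open>Number of closed curves when gluing alpha with the reflection of beta.\<close>
definition loops :: "nat list \<Rightarrow> nat list \<Rightarrow> nat" where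
  "loops \<alpha> \<beta> = card ({1..length \<alpha>} //
     (({(i, partner \<alpha> i) | i. i \<in> {1..length \<alpha>}} \<union> {(i, partner \<beta> i) | i. i \<in> {1..length \<alpha>}})\<^sup>*))"

definition markov :: "nat \<Rightarrow> vec \<Rightarrow> vec \<Rightarrow> qf" where
  "markov n v w = (\<Sum>\<alpha>\<in>D n. \<Sum>\<beta>\<in>D n. v \<alpha> * w \<beta> * qq ^ loops \<alpha> \<beta>)"

text \<open>Delta k here is Delta_k; Delta_{-1} = 0 gives Delta_1 = q.\<close>
fun Delta :: "nat \<Rightarrow> qf" where
  "Delta 0 = 1"
| "Delta (Suc 0) = qq"
| "Delta (Suc (Suc k)) = qq * Delta (Suc k) - Delta k"

text \<open>epa v a = e'_{(a, rest)} where v = e'_{rest}.\<close>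
primrec epa :: "vec \<Rightarrow> nat \<Rightarrow> vec" where
  "epa v 0 = (\<lambda>_. 0)"
| "epa v (Suc a) = (if a = 0 then Lk 1 v
     else (\<lambda>x. Lk (Suc a) v x - (Delta (a - 1) / Delta a) * epa v a x))"

fun ep :: "nat list \<Rightarrow> vec" where
  "ep [] = ind []"
| "ep [a] = ind (e [a])"
| "ep (a # b # r) = epa (ep (b # r)) a"

end

theory Submission
  imports Defs
begin

lemma shift_unshift: "x \<noteq> i \<Longrightarrow> x \<noteq> Suc i \<Longrightarrow> shift i (unshift i x) = x"
  by (auto simp: shift_def unshift_def)
lemma unshift_shift[simp]: "unshift i (shift i x) = x"
  by (simp add: shift_def unshift_def)
lemma shift_ne1[simp]: "shift i x \<noteq> i" and shift_ne2[simp]: "shift i x \<noteq> Suc i"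
  by (auto simp: shift_def)
lemma shift_ne3[simp]: "shift i x \<noteq> i + 1" by (auto simp: shift_def)
lemma shift_less_iff[simp]: "shift i x < shift i y \<longleftrightarrow> x < y"
  by (auto simp: shift_def)
lemma shift_inj[simp]: "shift i x = shift i y \<longleftrightarrow> x = y"
  by (auto simp: shift_def)
lemma shift_range: "1 \<le> x \<Longrightarrow> x + 2 \<le> N \<Longrightarrow> 1 \<le> shift i x \<and> shift i x \<le> N"
  by (auto simp: shift_def)
lemma unshift_range: "1 \<le> x \<Longrightarrow> x \<le> N \<Longrightarrow> x \<noteq> i \<Longrightarrow> x \<noteq> Suc i \<Longrightarrow> 1 \<le> i \<Longrightarrow> i + 1 \<le> N
   \<Longrightarrow> 1 \<le> unshift i x \<and> unshift i x + 2 \<le> N"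
  by (auto simp: unshift_def)

definition invd :: "nat \<Rightarrow> nat list \<Rightarrow> bool" where
  "invd n d \<longleftrightarrow> length d = 2 * n \<and>
     (\<forall>i\<in>{1..2*n}. partner d i \<in> {1..2*n} \<and> partner d i \<noteq> i \<and> partner d (partner d i) = i)"

lemma D_invd: "d \<in> D n \<Longrightarrow> invd n d"
  by (simp add: D_def is_diagram_def invd_def)

lemma D_ncr: "d \<in> D n \<Longrightarrow> a \<in> {1..2*n} \<Longrightarrow> b \<in> {1..2*n} \<Longrightarrow> a < b \<Longrightarrow> b < partner d a \<Longrightarrow> partner d a < partner d b \<Longrightarrow> False"
  by (auto simp: D_def is_diagram_def)

lemma D_iff: "d \<in> D n \<longleftrightarrow> invd n d \<and> (\<forall>a\<in>{1..2*n}. \<forall>b\<in>{1..2*n}. \<not> (a < b \<and> b < partner d a \<and> partner d a < partner d b))"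
  by (simp add: D_def is_diagram_def invd_def)

lemma partner_lk: "1 \<le> x \<Longrightarrow> x \<le> length d + 2 \<Longrightarrow> partner (lk k d) x =
   (if x = k then k + 1 else if x = k + 1 then k else shift k (partner d (unshift k x)))"
  by (simp add: lk_def partner_def nth_map_upt)

lemma length_lk[simp]: "length (lk k d) = length d + 2"
  by (simp add: lk_def)

lemma lk_invd:
  assumes "invd m d" "1 \<le> k" "k \<le> 2*m+1"
  shows "invd (Suc m) (lk k d)"
proof -
  have L: "length d = 2*m" using assms by (simp add: invd_def)
  { fix x assume x: "x \<in> {1..2*Suc m}"
    have "partner (lk k d) x \<in> {1..2*Suc m} \<and> partner (lk k d) x \<noteq> x \<and> partner (lk k d) (partner (lk k d) x) = x"
    proof (cases "x = k \<or> x = k+1")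
      case True then show ?thesis using x assms L by (auto simp: partner_lk)
    next
      case False
      then have u: "1 \<le> unshift k x \<and> unshift k x + 2 \<le> 2*Suc m" using unshift_range[of x "2*Suc m" k] x assms by auto
      then have u2: "unshift k x \<in> {1..2*m}" by auto
      define p where "p = partner d (unshift k x)"
      have p: "p \<in> {1..2*m}" "p \<noteq> unshift k x" "partner d p = unshift k x" using assms(1) u2 by (auto simp: invd_def p_def)
      have px: "partner (lk k d) x = shift k p" using False x L by (simp add: partner_lk p_def)
      have sr: "1 \<le> shift k p \<and> shift k p \<le> 2*Suc m" using shift_range[of p "2*Suc m" k] p by auto
      have "partner (lk k d) (shift k p) = shift k (unshift k x)" using sr L p by (simp add: partner_lk)
      also have "\<dots> = x" using False by (simp add: shift_unshift)
      finally show ?thesis using px sr p(2) False by (auto simp: shift_unshift dest: arg_cong[of _ _ "unshift k"])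
    qed }
  then show ?thesis using L by (simp add: invd_def)
qed

lemma lk_D:
  assumes "d \<in> D m" "1 \<le> k" "k \<le> 2*m+1"
  shows "lk k d \<in> D (Suc m)"
proof -
  have iv: "invd m d" using assms D_invd by auto
  have L: "length d = 2*m" using iv by (simp add: invd_def)
  have iv2: "invd (Suc m) (lk k d)" using lk_invd iv assms by auto
  { fix a b assume a: "a \<in> {1..2*Suc m}" and b: "b \<in> {1..2*Suc m}"
      and c: "a < b" "b < partner (lk k d) a" "partner (lk k d) a < partner (lk k d) b"
    have "False"
    proof (cases "a = k \<or> a = k+1 \<or> b = k \<or> b = k+1")
      case True then show ?thesis using a b c L by (auto simp: partner_lk split: if_splits)
    next
      case False
      have ua: "unshift k a \<in> {1..2*m}" using unshift_range[of a "2*Suc m" k] a assms False by auto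
      have ub: "unshift k b \<in> {1..2*m}" using unshift_range[of b "2*Suc m" k] b assms False by auto
      have pa: "partner (lk k d) a = shift k (partner d (unshift k a))" using False a L by (simp add: partner_lk)
      have pb: "partner (lk k d) b = shift k (partner d (unshift k b))" using False b L by (simp add: partner_lk)
      have sa: "a = shift k (unshift k a)" "b = shift k (unshift k b)" using False by (auto simp: shift_unshift)
      have "unshift k a < unshift k b" using c(1) sa by (metis shift_less_iff)
      moreover have "unshift k b < partner d (unshift k a)" using c(2) pa sa by (metis shift_less_iff)
      moreover have "partner d (unshift k a) < partner d (unshift k b)" using c(3) pa pb by simp
      ultimately show False using D_ncr[OF assms(1) ua ub] by auto
    qed }
  then show ?thesis using iv2 by (auto simp: D_iff)
qed

definition cq :: "nat \<Rightarrow> nat list \<Rightarrow> nat \<Rightarrow> nat" where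
  "cq i d z = (if partner d z = i then partner d (i+1) else if partner d z = i+1 then partner d i else partner d z)"

definition capd :: "nat \<Rightarrow> nat list \<Rightarrow> nat list" where
  "capd i d = map (\<lambda>j. unshift i (cq i d (shift i j))) [1..<length d - 1]"

lemma length_capd[simp]: "length (capd i d) = length d - 2"
  by (simp add: capd_def)

lemma partner_capd: assumes "1 \<le> x" "x + 2 \<le> length d" shows "partner (capd i d) x = unshift i (cq i d (shift i x))"
proof -
  have "[1..<length d - 1] ! (x-1) = x" using assms by (subst nth_upt) auto
  then show ?thesis using assms by (simp add: capd_def partner_def)
qed

lemma invdD: "invd n d \<Longrightarrow> z \<in> {1..2*n} \<Longrightarrow> partner d z \<in> {1..2*n} \<and> partner d z \<noteq> z \<and> partner d (partner d z) = z"
  by (simp add: invd_def)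

lemma cq_props:
  assumes iv: "invd n d" and i: "1 \<le> i" "i + 1 \<le> 2*n" and z: "z \<in> {1..2*n}" "z \<noteq> i" "z \<noteq> i+1"
  shows "cq i d z \<in> {1..2*n} \<and> cq i d z \<noteq> i \<and> cq i d z \<noteq> i+1 \<and> cq i d z \<noteq> z \<and> cq i d (cq i d z) = z"
proof -
  have Pi: "partner d i \<in> {1..2*n} \<and> partner d i \<noteq> i \<and> partner d (partner d i) = i" using invdD[OF iv, of i] i by auto
  have Pi1: "partner d (i+1) \<in> {1..2*n} \<and> partner d (i+1) \<noteq> i+1 \<and> partner d (partner d (i+1)) = i+1" using invdD[OF iv, of "i+1"] i by auto
  have Pz: "partner d z \<in> {1..2*n} \<and> partner d z \<noteq> z \<and> partner d (partner d z) = z" using invdD[OF iv, of z] z by auto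
  show ?thesis
  proof (cases "partner d z = i")
    case True
    then show ?thesis using Pi Pi1 Pz z by (auto simp: cq_def)
  next
    case F1: False
    show ?thesis
    proof (cases "partner d z = i+1")
      case True
      then show ?thesis using Pi Pi1 Pz z by (auto simp: cq_def)
    next
      case False
      then show ?thesis using F1 Pi Pi1 Pz z by (auto simp: cq_def)
    qed
  qed
qed

lemma capd_invd:
  assumes iv: "invd n d" and i: "1 \<le> i" "i + 1 \<le> 2*n"
  shows "invd (n-1) (capd i d)"
proof -
  have L: "length d = 2*n" using iv by (simp add: invd_def)
  { fix x assume x: "x \<in> {1..2*(n-1)}"
    define z where "z = shift i x"
    have z: "z \<in> {1..2*n}" "z \<noteq> i" "z \<noteq> i+1" using shift_range[of x "2*n" i] x by (auto simp: z_def)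
    note c = cq_props[OF iv i z]
    define w where "w = cq i d z"
    have px: "partner (capd i d) x = unshift i w" using x L by (subst partner_capd) (auto simp: z_def w_def)
    have ur: "1 \<le> unshift i w \<and> unshift i w + 2 \<le> 2*n" using unshift_range[of w "2*n" i] c i by (auto simp: w_def)
    have sw: "shift i (unshift i w) = w" using c by (simp add: shift_unshift w_def)
    have "partner (capd i d) (unshift i w) = unshift i (cq i d w)" using ur L sw by (simp add: partner_capd)
    also have "\<dots> = x" using c by (simp add: w_def z_def)
    finally have "partner (capd i d) x \<in> {1..2*(n-1)} \<and> partner (capd i d) x \<noteq> x \<and> partner (capd i d) (partner (capd i d) x) = x"
      using px ur c sw by (auto simp: w_def z_def)
  }
  then show ?thesis using L by (simp add: invd_def)
qed

definition rl :: "nat list \<Rightarrow> nat list \<Rightarrow> (nat \<times> nat) set" where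
  "rl a b = {(i, partner a i) | i. i \<in> {1..length a}} \<union> {(i, partner b i) | i. i \<in> {1..length a}}"

lemma loops_rl: "loops a b = card ({1..length a} // (rl a b)\<^sup>*)"
  by (simp add: loops_def rl_def)

lemma rl_mem: "(x, y) \<in> rl a b \<longleftrightarrow> x \<in> {1..length a} \<and> (y = partner a x \<or> y = partner b x)"
  by (auto simp: rl_def)

context
  fixes n i :: nat and \<beta> \<alpha> :: "nat list"
  assumes ivb: "invd n \<beta>" and iva: "invd (n-1) \<alpha>" and n1: "1 \<le> n" and i1: "1 \<le> i" and i2: "i + 1 \<le> 2*n"
begin

lemma Lb: "length \<beta> = 2*n" using ivb by (simp add: invd_def)
lemma La: "length \<alpha> = 2*n - 2" using iva by (simp add: invd_def)
lemma ivL: "invd n (lk i \<alpha>)" using lk_invd[OF iva i1] i2 n1 by (cases n) auto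
lemma ivC: "invd (n-1) (capd i \<beta>)" using capd_invd[OF ivb i1 i2] .
lemma LC: "length (capd i \<beta>) = 2*n-2" using Lb by simp

lemma pL_shift: "x \<in> {1..2*n-2} \<Longrightarrow> partner (lk i \<alpha>) (shift i x) = shift i (partner \<alpha> x)"
proof -
  assume x: "x \<in> {1..2*n-2}"
  have z: "1 \<le> shift i x \<and> shift i x \<le> length \<alpha> + 2" proof -
    have "x + 2 \<le> 2*n" using x n1 by auto
    then show ?thesis using shift_range[of x "2*n" i] x La n1 by auto
  qed
  show ?thesis using z by (subst partner_lk) (auto simp del: One_nat_def)
qed

lemma pL_i: "partner (lk i \<alpha>) i = i + 1" using La i1 i2 by (subst partner_lk) auto
lemma pL_i1: "partner (lk i \<alpha>) (i+1) = i" using La i1 i2 by (subst partner_lk) auto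

lemma pC: "x \<in> {1..2*n-2} \<Longrightarrow> shift i (partner (capd i \<beta>) x) = cq i \<beta> (shift i x)"
proof -
  assume x: "x \<in> {1..2*n-2}"
  have z: "shift i x \<in> {1..2*n}" using shift_range[of x "2*n" i] x by auto
  have c: "cq i \<beta> (shift i x) \<noteq> i \<and> cq i \<beta> (shift i x) \<noteq> i+1" using cq_props[OF ivb i1 i2 z] by auto
  show ?thesis using x Lb c by (subst partner_capd) (auto simp: shift_unshift)
qed

abbreviation "R1 \<equiv> rl \<beta> (lk i \<alpha>)"
abbreviation "R2 \<equiv> rl (capd i \<beta>) \<alpha>"

lemma fwd_step: "(x, y) \<in> R2 \<Longrightarrow> (shift i x, shift i y) \<in> R1\<^sup>*"
proof -
  assume "(x, y) \<in> R2"
  then have x: "x \<in> {1..2*n-2}" and y: "y = partner (capd i \<beta>) x \<or> y = partner \<alpha> x" using LC by (auto simp: rl_mem)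
  have z: "shift i x \<in> {1..2*n}" using shift_range[of x "2*n" i] x by auto
  from y show ?thesis
  proof
    assume y: "y = partner \<alpha> x"
    have "(shift i x, shift i y) \<in> R1" using z Lb pL_shift[OF x] y by (auto simp: rl_mem)
    then show ?thesis by auto
  next
    assume y: "y = partner (capd i \<beta>) x"
    have sy: "shift i y = cq i \<beta> (shift i x)" using pC[OF x] y by simp
    have ii: "i \<in> {1..2*n}" "i+1 \<in> {1..2*n}" using i1 i2 by auto
    have s1: "(shift i x, partner \<beta> (shift i x)) \<in> R1" using z Lb by (auto simp: rl_mem)
    have s2: "(i, i+1) \<in> R1" "(i+1, i) \<in> R1" using ii Lb pL_i pL_i1 by (auto simp: rl_mem)
    have s3: "(i, partner \<beta> i) \<in> R1" "(i+1, partner \<beta> (i+1)) \<in> R1" using ii Lb by (auto simp: rl_mem)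
    show ?thesis
    proof (cases "partner \<beta> (shift i x) = i")
      case True
      then have "shift i y = partner \<beta> (i+1)" using sy by (simp add: cq_def)
      then show ?thesis using s1 s2 s3 True
        by (metis converse_rtrancl_into_rtrancl r_into_rtrancl)
    next
      case F: False
      show ?thesis
      proof (cases "partner \<beta> (shift i x) = i+1")
        case True
        then have "shift i y = partner \<beta> i" using sy F by (simp add: cq_def)
        then show ?thesis using s1 s2 s3 True
          by (metis converse_rtrancl_into_rtrancl r_into_rtrancl)
      next
        case False
        then have "shift i y = partner \<beta> (shift i x)" using sy F by (simp add: cq_def)
        then show ?thesis using s1 by auto
      qed
    qed
  qed
qed

lemma fwd: "(x, y) \<in> R2\<^sup>* \<Longrightarrow> (shift i x, shift i y) \<in> R1\<^sup>*"
  by (induction rule: rtrancl_induct) (auto intro: rtrancl_trans fwd_step)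

lemma unsh_B: "w \<in> {1..2*n} \<Longrightarrow> w \<noteq> i \<Longrightarrow> w \<noteq> i+1 \<Longrightarrow> unshift i w \<in> {1..2*n-2}"
  using unshift_range[of w "2*n" i] i1 i2 by auto

lemma C_step: assumes w: "w \<in> {1..2*n}" "w \<noteq> i" "w \<noteq> i+1"
  shows "(unshift i w, unshift i (cq i \<beta> w)) \<in> R2"
proof -
  have u: "unshift i w \<in> {1..2*n-2}" using unsh_B w by auto
  have "shift i (partner (capd i \<beta>) (unshift i w)) = cq i \<beta> w" using pC[OF u] w by (simp add: shift_unshift)
  then have "partner (capd i \<beta>) (unshift i w) = unshift i (cq i \<beta> w)" by (metis unshift_shift)
  then show ?thesis using u LC by (auto simp: rl_mem)
qed

lemma A_step: assumes w: "w \<in> {1..2*n}" "w \<noteq> i" "w \<noteq> i+1"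
  shows "(unshift i w, unshift i (partner (lk i \<alpha>) w)) \<in> R2"
proof -
  have u: "unshift i w \<in> {1..2*n-2}" using unsh_B w by auto
  have "partner (lk i \<alpha>) w = shift i (partner \<alpha> (unshift i w))" using pL_shift[OF u] w by (simp add: shift_unshift)
  then show ?thesis using u LC by (auto simp: rl_mem)
qed

lemma bwd:
  assumes "(shift i x, z) \<in> R1\<^sup>*" and x: "x \<in> {1..2*n-2}"
  shows "(z \<noteq> i \<and> z \<noteq> i+1 \<longrightarrow> (x, unshift i z) \<in> R2\<^sup>*) \<and>
         (z = i \<or> z = i+1 \<longrightarrow> (\<exists>w\<in>{1..2*n}. w \<noteq> i \<and> w \<noteq> i+1 \<and> (partner \<beta> w = i \<or> partner \<beta> w = i+1) \<and> (x, unshift i w) \<in> R2\<^sup>*))"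
  using assms(1)
proof (induction rule: rtrancl_induct)
  case base
  then show ?case by auto
next
  case (step y z)
  from step.hyps(2) have y: "y \<in> {1..2*n}" and yz: "z = partner \<beta> y \<or> z = partner (lk i \<alpha>) y" using Lb by (auto simp: rl_mem)
  have Py: "partner \<beta> y \<in> {1..2*n} \<and> partner \<beta> y \<noteq> y \<and> partner \<beta> (partner \<beta> y) = y" using invdD[OF ivb y] .
  have Pi: "partner \<beta> i \<in> {1..2*n} \<and> partner \<beta> i \<noteq> i \<and> partner \<beta> (partner \<beta> i) = i" using invdD[OF ivb, of i] i1 i2 by auto
  have Pi1: "partner \<beta> (i+1) \<in> {1..2*n} \<and> partner \<beta> (i+1) \<noteq> i+1 \<and> partner \<beta> (partner \<beta> (i+1)) = i+1" using invdD[OF ivb, of "i+1"] i1 i2 by auto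
  show ?case
  proof (cases "y = i \<or> y = i+1")
    case ys: True
    then obtain w where w: "w\<in>{1..2*n}" "w \<noteq> i" "w \<noteq> i+1" "partner \<beta> w = i \<or> partner \<beta> w = i+1" "(x, unshift i w) \<in> R2\<^sup>*"
      using step.IH by blast
    from yz show ?thesis
    proof
      assume zL: "z = partner (lk i \<alpha>) y"
      then have "z = i \<or> z = i+1" using ys pL_i pL_i1 by auto
      then show ?thesis using w by blast
    next
      assume zb: "z = partner \<beta> y"
      show ?thesis
      proof (cases "z = i \<or> z = i+1")
        case True then show ?thesis using w by blast
      next
        case zn: False
        have z: "z \<in> {1..2*n}" using Py zb by auto
        have "(unshift i w, unshift i z) \<in> R2\<^sup>*"
        proof (cases "partner \<beta> w = y")
          case True
          then have "w = z" using zb invdD[OF ivb w(1)] by auto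
          then show ?thesis by auto
        next
          case False
          then have "cq i \<beta> w = z" using w(4) ys zb by (auto simp: cq_def)
          then show ?thesis using C_step[OF w(1-3)] by auto
        qed
        then show ?thesis using w zn by (auto intro: rtrancl_trans)
      qed
    qed
  next
    case yn: False
    then have IH: "(x, unshift i y) \<in> R2\<^sup>*" using step.IH by blast
    from yz show ?thesis
    proof
      assume zL: "z = partner (lk i \<alpha>) y"
      have "z \<noteq> i \<and> z \<noteq> i+1"
      proof -
        have u: "unshift i y \<in> {1..2*n-2}" using unsh_B y yn by auto
        have "z = shift i (partner \<alpha> (unshift i y))" using pL_shift[OF u] yn zL by (simp add: shift_unshift)
        then show ?thesis by simp
      qed
      then show ?thesis using A_step[of y] y yn IH zL by (auto intro: rtrancl_into_rtrancl)
    next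
      assume zb: "z = partner \<beta> y"
      show ?thesis
      proof (cases "z = i \<or> z = i+1")
        case True
        have "y\<in>{1..2*n} \<and> y \<noteq> i \<and> y \<noteq> i+1 \<and> (partner \<beta> y = i \<or> partner \<beta> y = i+1) \<and> (x, unshift i y) \<in> R2\<^sup>*"
          using y yn zb IH True by simp
        then show ?thesis using True by blast
      next
        case False
        then have "cq i \<beta> y = z" using zb by (auto simp: cq_def)
        then show ?thesis using C_step[of y] y yn IH False by (auto intro: rtrancl_into_rtrancl)
      qed
    qed
  qed
qed

lemma equivR: "x \<in> {1..2*n-2} \<Longrightarrow> y \<in> {1..2*n-2} \<Longrightarrow> (x, y) \<in> R2\<^sup>* \<longleftrightarrow> (shift i x, shift i y) \<in> R1\<^sup>*"
proof
  assume "(shift i x, shift i y) \<in> R1\<^sup>*" and x: "x \<in> {1..2*n-2}"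
  then have "(shift i y \<noteq> i \<and> shift i y \<noteq> i+1 \<longrightarrow> (x, unshift i (shift i y)) \<in> R2\<^sup>*)"
    using bwd by blast
  then show "(x, y) \<in> R2\<^sup>*" by simp
qed (rule fwd)

end

lemma rl_sym: assumes "invd m a" "invd m b" shows "sym (rl a b)"
proof -
  have L: "length a = 2*m" using assms by (simp add: invd_def)
  show ?thesis unfolding sym_def
  proof (intro allI impI)
    fix x y assume "(x, y) \<in> rl a b"
    then have x: "x \<in> {1..2*m}" and y: "y = partner a x \<or> y = partner b x" using L by (auto simp: rl_mem)
    show "(y, x) \<in> rl a b" using y invdD[OF assms(1) x] invdD[OF assms(2) x] L by (auto simp: rl_mem)
  qed
qed

lemma class_eq: "sym r \<Longrightarrow> r\<^sup>*``{x} = r\<^sup>*``{y} \<longleftrightarrow> (x, y) \<in> r\<^sup>*"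
proof -
  assume "sym r"
  then have "equiv UNIV (r\<^sup>*)" by (simp add: equiv_def refl_rtrancl sym_rtrancl trans_rtrancl)
  then show ?thesis using equiv_class_eq_iff[of UNIV "r\<^sup>*" x y] by simp
qed

lemma quot_img: "A // r = (\<lambda>a. r``{a}) ` A"
  unfolding quotient_def by blast

lemma card_kernel:
  assumes "\<And>x y. x \<in> B \<Longrightarrow> y \<in> B \<Longrightarrow> g x = g y \<longleftrightarrow> h x = h y"
  shows "card (g ` B) = card (h ` B)"
proof -
  define F where "F u = h (inv_into B g u)" for u
  have Fg: "F (g x) = h x" if "x \<in> B" for x
  proof -
    have "inv_into B g (g x) \<in> B" "g (inv_into B g (g x)) = g x" using that by (auto intro: inv_into_into f_inv_into_f)
    then show ?thesis using assms that by (auto simp: F_def)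
  qed
  have "inj_on F (g ` B)"
  proof (rule inj_onI)
    fix u v assume "u \<in> g ` B" "v \<in> g ` B" "F u = F v"
    then obtain x y where "x \<in> B" "y \<in> B" "u = g x" "v = g y" "h x = h y" using Fg by auto
    then show "u = v" using assms by auto
  qed
  moreover have "F ` (g ` B) = h ` B"
  proof
    show "F ` g ` B \<subseteq> h ` B" using Fg by auto
    show "h ` B \<subseteq> F ` g ` B"
    proof
      fix y assume "y \<in> h ` B"
      then obtain x where "x \<in> B" "y = h x" by auto
      then show "y \<in> F ` g ` B" using Fg by (metis image_eqI)
    qed
  qed
  ultimately show ?thesis by (metis card_image)
qed


context
  fixes n i :: nat and \<beta> \<alpha> :: "nat list"
  assumes ivb: "invd n \<beta>" and iva: "invd (n-1) \<alpha>" and n1: "1 \<le> n" and i1: "1 \<le> i" and i2: "i + 1 \<le> 2*n"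
begin

lemma loops_lk: "loops \<beta> (lk i \<alpha>) = loops (capd i \<beta>) \<alpha> + (if partner \<beta> i = i + 1 then 1 else 0)"
proof -
  let ?R1 = "rl \<beta> (lk i \<alpha>)" and ?R2 = "rl (capd i \<beta>) \<alpha>"
  let ?A = "{1..2*n}" and ?B = "{1..2*n-2}"
  have Lb: "length \<beta> = 2*n" using ivb by (simp add: invd_def)
  have s1: "sym ?R1" using rl_sym[OF ivb ivL[OF ivb iva n1 i1 i2]] .
  have s2: "sym ?R2" using rl_sym[OF ivC[OF ivb iva n1 i1 i2] iva] .
  have eqv: "(x, y) \<in> ?R2\<^sup>* \<longleftrightarrow> (shift i x, shift i y) \<in> ?R1\<^sup>*" if "x \<in> ?B" "y \<in> ?B" for x y
    using equivR[OF ivb iva n1 i1 i2 that] .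
  have l2: "loops (capd i \<beta>) \<alpha> = card ((\<lambda>b. ?R2\<^sup>*``{b}) ` ?B)"
    using Lb by (simp add: loops_rl quot_img)
  have ker: "card ((\<lambda>b. ?R1\<^sup>*``{shift i b}) ` ?B) = card ((\<lambda>b. ?R2\<^sup>*``{b}) ` ?B)"
    by (rule card_kernel) (simp add: class_eq[OF s1] class_eq[OF s2] eqv)
  have l1: "loops \<beta> (lk i \<alpha>) = card ((\<lambda>a. ?R1\<^sup>*``{a}) ` ?A)"
    using Lb by (simp add: loops_rl quot_img)
  have ns: "(\<lambda>a. ?R1\<^sup>*``{a}) ` (?A - {i, i+1}) = (\<lambda>b. ?R1\<^sup>*``{shift i b}) ` ?B"
  proof
    show "(\<lambda>a. ?R1\<^sup>*``{a}) ` (?A - {i, i+1}) \<subseteq> (\<lambda>b. ?R1\<^sup>*``{shift i b}) ` ?B"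
    proof
      fix c assume "c \<in> (\<lambda>a. ?R1\<^sup>*``{a}) ` (?A - {i, i+1})"
      then obtain a where a0: "a \<in> ?A - {i, i+1}" and c: "c = ?R1\<^sup>*``{a}" by (rule imageE)
      have a: "a \<in> ?A" "a \<noteq> i" "a \<noteq> i+1" using a0 by auto
      have u: "unshift i a \<in> ?B" using unsh_B[OF ivb iva n1 i1 i2, of a] a by simp
      have sh: "shift i (unshift i a) = a" using a by (simp add: shift_unshift)
      show "c \<in> (\<lambda>b. ?R1\<^sup>*``{shift i b}) ` ?B"
      proof (rule image_eqI[where x = "unshift i a"])
        show "c = ?R1\<^sup>*``{shift i (unshift i a)}" using c sh by simp
      qed (rule u)
    qed
  next
    show "(\<lambda>b. ?R1\<^sup>*``{shift i b}) ` ?B \<subseteq> (\<lambda>a. ?R1\<^sup>*``{a}) ` (?A - {i, i+1})"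
    proof
      fix c assume "c \<in> (\<lambda>b. ?R1\<^sup>*``{shift i b}) ` ?B"
      then obtain b where b: "b \<in> ?B" and c: "c = ?R1\<^sup>*``{shift i b}" by auto
      have "shift i b \<in> ?A - {i, i+1}" using shift_range[of b "2*n" i] b by auto
      then show "c \<in> (\<lambda>a. ?R1\<^sup>*``{a}) ` (?A - {i, i+1})" using c by blast
    qed
  qed
  have ii: "i \<in> ?A" "i+1 \<in> ?A" using i1 i2 by auto
  have AU: "?A = (?A - {i, i+1}) \<union> {i, i+1}" using ii by auto
  have st: "(i, i+1) \<in> ?R1" using ii Lb pL_i[OF ivb iva n1 i1 i2] by (auto simp: rl_mem)
  show ?thesis
  proof (cases "partner \<beta> i = i + 1")
    case False
    have Pi: "partner \<beta> i \<in> ?A" "partner \<beta> i \<noteq> i" using invdD[OF ivb ii(1)] by auto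
    have a1: "(i, partner \<beta> i) \<in> ?R1" using ii Lb by (auto simp: rl_mem)
    have "?R1\<^sup>*``{i} = ?R1\<^sup>*``{partner \<beta> i}" using a1 class_eq[OF s1] by auto
    then have c1: "?R1\<^sup>*``{i} \<in> (\<lambda>a. ?R1\<^sup>*``{a}) ` (?A - {i, i+1})" using Pi False by auto
    have "?R1\<^sup>*``{i+1} = ?R1\<^sup>*``{i}" using st class_eq[OF s1] by (metis r_into_rtrancl symD sym_rtrancl s1)
    then have c2: "?R1\<^sup>*``{i+1} \<in> (\<lambda>a. ?R1\<^sup>*``{a}) ` (?A - {i, i+1})" using c1 by simp
    have "(\<lambda>a. ?R1\<^sup>*``{a}) ` ?A = (\<lambda>a. ?R1\<^sup>*``{a}) ` ((?A - {i, i+1}) \<union> {i, i+1})"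
      by (rule arg_cong[OF AU])
    also have "\<dots> = (\<lambda>a. ?R1\<^sup>*``{a}) ` (?A - {i, i+1}) \<union> {?R1\<^sup>*``{i}, ?R1\<^sup>*``{i+1}}"
      by (simp only: image_Un image_insert image_empty)
    also have "\<dots> = (\<lambda>a. ?R1\<^sup>*``{a}) ` (?A - {i, i+1})"
      by (simp only: Un_insert_right Un_empty_right insert_absorb c1 c2)
    finally have im: "(\<lambda>a. ?R1\<^sup>*``{a}) ` ?A = (\<lambda>a. ?R1\<^sup>*``{a}) ` (?A - {i, i+1})" .
    have "loops \<beta> (lk i \<alpha>) = card ((\<lambda>a. ?R1\<^sup>*``{a}) ` (?A - {i, i+1}))" using l1 im by (simp only:)
    also have "\<dots> = card ((\<lambda>b. ?R1\<^sup>*``{shift i b}) ` ?B)" by (simp only: ns)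
    also have "\<dots> = loops (capd i \<beta>) \<alpha>" by (simp only: ker l2)
    finally show ?thesis using False by simp
  next
    case True
    have cls: "?R1\<^sup>*``{i} = {i, i+1}"
    proof
      have "(i, z) \<in> ?R1\<^sup>* \<Longrightarrow> z \<in> {i, i+1}" for z
      proof (induction rule: rtrancl_induct)
        case (step y z)
        then have y: "y = i \<or> y = i+1" and yz: "z = partner \<beta> y \<or> z = partner (lk i \<alpha>) y" using Lb by (auto simp: rl_mem)
        have "partner \<beta> (i+1) = i" using True invdD[OF ivb ii(1)] by auto
        then show ?case using y yz True pL_i[OF ivb iva n1 i1 i2] pL_i1[OF ivb iva n1 i1 i2] by auto
      qed simp
      then show "?R1\<^sup>*``{i} \<subseteq> {i, i+1}" by auto
      show "{i, i+1} \<subseteq> ?R1\<^sup>*``{i}" using st by auto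
    qed
    have e1: "?R1\<^sup>*``{i+1} = ?R1\<^sup>*``{i}" using st class_eq[OF s1] by (metis r_into_rtrancl symD sym_rtrancl s1)
    have "(\<lambda>a. ?R1\<^sup>*``{a}) ` ?A = (\<lambda>a. ?R1\<^sup>*``{a}) ` ((?A - {i, i+1}) \<union> {i, i+1})"
      by (rule arg_cong[OF AU])
    also have "\<dots> = (\<lambda>a. ?R1\<^sup>*``{a}) ` (?A - {i, i+1}) \<union> {?R1\<^sup>*``{i}, ?R1\<^sup>*``{i+1}}"
      by (simp only: image_Un image_insert image_empty)
    also have "\<dots> = insert {i, i+1} ((\<lambda>a. ?R1\<^sup>*``{a}) ` (?A - {i, i+1}))"
      using cls e1 by (simp only: Un_insert_right Un_empty_right insert_absorb2)
    finally have eqI: "(\<lambda>a. ?R1\<^sup>*``{a}) ` ?A = insert {i, i+1} ((\<lambda>a. ?R1\<^sup>*``{a}) ` (?A - {i, i+1}))" .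
    have notin: "{i, i+1} \<notin> (\<lambda>a. ?R1\<^sup>*``{a}) ` (?A - {i, i+1})"
    proof
      assume "{i, i+1} \<in> (\<lambda>a. ?R1\<^sup>*``{a}) ` (?A - {i, i+1})"
      then obtain a where a: "a \<notin> {i, i+1}" "{i, i+1} = ?R1\<^sup>*``{a}" by auto
      have "a \<in> ?R1\<^sup>*``{a}" by auto
      then show False using a by auto
    qed
    have fin: "finite ((\<lambda>a. ?R1\<^sup>*``{a}) ` (?A - {i, i+1}))" by simp
    have "card ((\<lambda>a. ?R1\<^sup>*``{a}) ` ?A) = card (insert {i, i+1} ((\<lambda>a. ?R1\<^sup>*``{a}) ` (?A - {i, i+1})))"
      by (simp only: eqI)
    also have "\<dots> = Suc (card ((\<lambda>a. ?R1\<^sup>*``{a}) ` (?A - {i, i+1})))"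
      by (rule card_insert_disjoint[OF fin notin])
    also have "\<dots> = Suc (card ((\<lambda>b. ?R1\<^sup>*``{shift i b}) ` ?B))" by (simp only: ns)
    also have "\<dots> = Suc (loops (capd i \<beta>) \<alpha>)" by (simp only: ker l2)
    finally show ?thesis using l1 True by simp
  qed
qed

end


lemma finite_D: "finite (D n)"
proof -
  have "D n \<subseteq> {xs. set xs \<subseteq> {0..2*n} \<and> length xs = 2*n}"
  proof
    fix d assume d: "d \<in> D n"
    have iv: "invd n d" using D_invd[OF d] .
    then have L: "length d = 2*n" by (simp add: invd_def)
    have "set d \<subseteq> {0..2*n}"
    proof
      fix x assume "x \<in> set d"
      then obtain k where k: "k < length d" "x = d ! k" by (auto simp: in_set_conv_nth)
      have "partner d (k+1) \<in> {1..2*n}" using invdD[OF iv, of "k+1"] k L by auto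
      then show "x \<in> {0..2*n}" using k by (simp add: partner_def)
    qed
    then show "d \<in> {xs. set xs \<subseteq> {0..2*n} \<and> length xs = 2*n}" using L by simp
  qed
  moreover have "finite {xs. set xs \<subseteq> {0..2*n} \<and> length xs = 2*n}"
    by (rule finite_lists_length_eq) simp
  ultimately show ?thesis by (rule finite_subset)
qed

definition M :: "nat \<Rightarrow> nat list \<Rightarrow> vec \<Rightarrow> qf" where
  "M n \<beta> w = (\<Sum>\<alpha>\<in>D n. w \<alpha> * qq ^ loops \<beta> \<alpha>)"

lemma markov_ind: "\<beta> \<in> D n \<Longrightarrow> markov n (ind \<beta>) w = M n \<beta> w"
proof -
  assume b: "\<beta> \<in> D n"
  have "markov n (ind \<beta>) w = (\<Sum>a\<in>D n. if a = \<beta> then (\<Sum>b\<in>D n. w b * qq ^ loops \<beta> b) else 0)"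
    unfolding markov_def by (rule sum.cong) (auto simp: ind_def)
  also have "\<dots> = M n \<beta> w" using b by (simp add: M_def finite_D)
  finally show ?thesis .
qed

lemma M_lin: "M n \<beta> (\<lambda>x. f x - c * g x) = M n \<beta> f - c * M n \<beta> g"
  by (simp add: M_def sum_subtractf sum_distrib_left algebra_simps)

lemma M_zero: "M n \<beta> (\<lambda>_. 0) = 0"
  by (simp add: M_def)

lemma M_Lk:
  assumes ivb: "invd n \<beta>" and n1: "1 \<le> n" and i1: "1 \<le> i" and i2: "i + 1 \<le> 2*n"
  shows "M n \<beta> (Lk i v) = qq ^ (if partner \<beta> i = i + 1 then 1 else 0) * M (n-1) (capd i \<beta>) v"
proof -
  let ?h = "\<lambda>\<alpha>. v \<alpha> * qq ^ loops \<beta> (lk i \<alpha>)"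
  have "M n \<beta> (Lk i v) = (\<Sum>\<gamma>\<in>D n. sum ?h {\<alpha>. \<alpha> \<in> D (n-1) \<and> lk i \<alpha> = \<gamma>})"
    unfolding M_def Lk_def
  proof (rule sum.cong[OF refl])
    fix \<gamma> assume g: "\<gamma> \<in> D n"
    have "length \<gamma> div 2 - 1 = n - 1" using D_invd[OF g] by (simp add: invd_def)
    then show "(\<Sum>\<alpha>\<in>{\<alpha> \<in> D (length \<gamma> div 2 - 1). lk i \<alpha> = \<gamma>}. v \<alpha>) * qq ^ loops \<beta> \<gamma> = sum ?h {\<alpha>. \<alpha> \<in> D (n-1) \<and> lk i \<alpha> = \<gamma>}"
      by (simp add: sum_distrib_right)
  qed
  also have "\<dots> = sum ?h (D (n-1))"
  proof (rule sum.group[OF finite_D finite_D])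
    show "lk i ` D (n - 1) \<subseteq> D n"
    proof
      fix \<gamma> assume "\<gamma> \<in> lk i ` D (n-1)"
      then obtain \<alpha> where a: "\<alpha> \<in> D (n-1)" "\<gamma> = lk i \<alpha>" by auto
      have "lk i \<alpha> \<in> D (Suc (n-1))" using lk_D[OF a(1) i1] i2 n1 by auto
      then show "\<gamma> \<in> D n" using a n1 by simp
    qed
  qed
  also have "\<dots> = (\<Sum>\<alpha>\<in>D (n-1). qq ^ (if partner \<beta> i = i + 1 then 1 else 0) * (v \<alpha> * qq ^ loops (capd i \<beta>) \<alpha>))"
  proof (rule sum.cong[OF refl])
    fix \<alpha> assume a: "\<alpha> \<in> D (n-1)"
    have "loops \<beta> (lk i \<alpha>) = loops (capd i \<beta>) \<alpha> + (if partner \<beta> i = i + 1 then 1 else 0)"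
      using loops_lk[OF ivb D_invd[OF a] n1 i1 i2] .
    then show "?h \<alpha> = qq ^ (if partner \<beta> i = i + 1 then 1 else 0) * (v \<alpha> * qq ^ loops (capd i \<beta>) \<alpha>)"
      by (simp add: power_add)
  qed
  also have "\<dots> = qq ^ (if partner \<beta> i = i + 1 then 1 else 0) * M (n-1) (capd i \<beta>) v"
    by (simp add: M_def sum_distrib_left)
  finally show ?thesis .
qed


fun Dp :: "nat \<Rightarrow> rat poly" where
  "Dp 0 = 1"
| "Dp (Suc 0) = [:0, 1:]"
| "Dp (Suc (Suc k)) = [:0, 1:] * Dp (Suc k) - Dp k"

lemma Delta_Dp: "Delta k = Fract (Dp k) 1"
  by (induction k rule: Dp.induct) (simp_all add: qq_def One_fract_def)

lemma poly_Dp: "poly (Dp k) 2 = of_nat (k + 1)"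
  by (induction k rule: Dp.induct) (simp_all add: algebra_simps)

lemma Delta_nz: "Delta k \<noteq> 0"
proof -
  have "Dp k \<noteq> 0" using poly_Dp[of k] by auto
  then show ?thesis by (simp add: Delta_Dp Zero_fract_def eq_fract)
qed

lemma qq_nz: "qq \<noteq> 0" using Delta_nz[of 1] by simp


lemma list_eq_partner: "length c1 = length c2 \<Longrightarrow> (\<And>x. 1 \<le> x \<Longrightarrow> x \<le> length c1 \<Longrightarrow> partner c1 x = partner c2 x) \<Longrightarrow> c1 = c2"
proof (rule nth_equalityI)
  fix k assume "length c1 = length c2" "\<And>x. 1 \<le> x \<Longrightarrow> x \<le> length c1 \<Longrightarrow> partner c1 x = partner c2 x" "k < length c1"
  then have "partner c1 (k+1) = partner c2 (k+1)" by simp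
  then show "c1 ! k = c2 ! k" by (simp add: partner_def)
qed

context
  fixes n m :: nat and \<beta> :: "nat list"
  assumes ivb: "invd n \<beta>" and m1: "1 \<le> m" and m2: "m + 1 \<le> 2*n" and arc: "partner \<beta> m = m + 1"
begin

lemma Lb2: "length \<beta> = 2*n" using ivb by (simp add: invd_def)

lemma arc2: "partner \<beta> (m+1) = m"
proof -
  have "partner \<beta> (partner \<beta> m) = m" using invdD[OF ivb, of m] m1 m2 by auto
  then show ?thesis using arc by simp
qed

lemma Pinj: assumes "z \<in> {1..2*n}" "partner \<beta> z = m" shows "z = m + 1"
proof -
  have "partner \<beta> (partner \<beta> z) = z" using invdD[OF ivb assms(1)] by auto
  then show ?thesis using assms(2) arc by simp
qed
lemma Pinj2: assumes "z \<in> {1..2*n}" "partner \<beta> z = m + 1" shows "z = m"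
proof -
  have "partner \<beta> (partner \<beta> z) = z" using invdD[OF ivb assms(1)] by auto
  then show ?thesis using assms(2) arc2 by simp
qed

lemma capd_low: assumes "1 \<le> i" "i + 2 \<le> m" shows "partner (capd i \<beta>) (m-2) = m-1"
proof -
  have a: "shift i (m-2) = m" using assms by (auto simp: shift_def)
  have b: "cq i \<beta> m = m + 1" using assms arc by (auto simp: cq_def)
  have c: "unshift i (m+1) = m - 1" using assms by (auto simp: unshift_def)
  show ?thesis using Lb2 m2 assms a b c by (subst partner_capd) auto
qed

lemma capd_high: assumes "m + 2 \<le> i" "i + 1 \<le> 2*n" shows "partner (capd i \<beta>) m = m+1"
proof -
  have a: "shift i m = m" using assms by (auto simp: shift_def)
  have b: "cq i \<beta> m = m + 1" using assms arc by (auto simp: cq_def)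
  have c: "unshift i (m+1) = m + 1" using assms by (auto simp: unshift_def)
  show ?thesis using Lb2 m1 assms a b c by (subst partner_capd) auto
qed

lemma capd_mid1: assumes "2 \<le> m" shows "capd (m-1) \<beta> = capd m \<beta>"
proof (rule list_eq_partner)
  fix x assume x: "1 \<le> x" "x \<le> length (capd (m-1) \<beta>)"
  have xr: "x + 2 \<le> 2*n" using x Lb2 by simp
  have s1: "shift (m-1) x \<in> {1..2*n}" "shift m x \<in> {1..2*n}" using shift_range[of x "2*n"] x xr by auto
  show "partner (capd (m-1) \<beta>) x = partner (capd m \<beta>) x"
  proof (cases "x = m - 1")
    case True
    then have "shift (m-1) x = m+1" "shift m x = m-1" using assms by (auto simp: shift_def)
    moreover have r: "m - 1 \<in> {1..2*n}" using assms m2 by auto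
    moreover have "partner \<beta> (m-1) \<noteq> m" "partner \<beta> (m-1) \<noteq> m + 1" "partner \<beta> (m-1) \<noteq> m - 1"
    proof -
      show "partner \<beta> (m-1) \<noteq> m" using Pinj[OF r] assms by auto
      show "partner \<beta> (m-1) \<noteq> m + 1" using Pinj2[OF r] assms by auto
      show "partner \<beta> (m-1) \<noteq> m - 1" using invdD[OF ivb r] by auto
    qed
    ultimately show ?thesis using x xr Lb2 arc arc2 assms
      by (auto simp add: partner_capd cq_def unshift_def)
  next
    case False
    then have sh: "shift (m-1) x = shift m x" using assms by (auto simp: shift_def)
    define z where "z = shift m x"
    have z: "z \<noteq> m" "z \<noteq> m+1" "z \<noteq> m - 1" using False assms by (auto simp: z_def shift_def)
    have pz: "partner \<beta> z \<noteq> m" "partner \<beta> z \<noteq> m+1" using Pinj[of z] Pinj2[of z] s1 z by (auto simp: z_def)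
    show ?thesis using x xr Lb2 sh pz arc arc2 assms
      by (auto simp add: partner_capd cq_def unshift_def z_def[symmetric])
  qed
qed (simp)

lemma capd_mid2: assumes "m + 2 \<le> 2*n" shows "capd (m+1) \<beta> = capd m \<beta>"
proof (rule list_eq_partner)
  fix x assume x: "1 \<le> x" "x \<le> length (capd (m+1) \<beta>)"
  have xr: "x + 2 \<le> 2*n" using x Lb2 by simp
  have s1: "shift (m+1) x \<in> {1..2*n}" "shift m x \<in> {1..2*n}" using shift_range[of x "2*n"] x xr by auto
  show "partner (capd (m+1) \<beta>) x = partner (capd m \<beta>) x"
  proof (cases "x = m")
    case True
    then have "shift (m+1) x = m" "shift m x = m+2" by (auto simp: shift_def)
    moreover have r: "m + 2 \<in> {1..2*n}" using assms m2 by auto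
    moreover have "partner \<beta> (m+2) \<noteq> m" "partner \<beta> (m+2) \<noteq> m + 1" "partner \<beta> (m+2) \<noteq> m + 2"
    proof -
      show "partner \<beta> (m+2) \<noteq> m" using Pinj[OF r] by auto
      show "partner \<beta> (m+2) \<noteq> m + 1" using Pinj2[OF r] by auto
      show "partner \<beta> (m+2) \<noteq> m + 2" using invdD[OF ivb r] by auto
    qed
    ultimately show ?thesis using x xr Lb2 arc arc2 assms
      by (simp add: partner_capd cq_def unshift_def)
  next
    case False
    then have sh: "shift (m+1) x = shift m x" by (auto simp: shift_def)
    define z where "z = shift m x"
    have z: "z \<noteq> m" "z \<noteq> m+1" "z \<noteq> m + 2" using False by (auto simp: z_def shift_def)
    have pz: "partner \<beta> z \<noteq> m" "partner \<beta> z \<noteq> m+1" using Pinj[of z] Pinj2[of z] s1 z by (auto simp: z_def)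
    show ?thesis using x xr Lb2 sh pz arc arc2
      by (simp add: partner_capd cq_def unshift_def z_def[symmetric])
  qed
qed (simp)

end


lemma M_epa_Suc: "M n \<beta> (epa v (Suc a)) = (if a = 0 then M n \<beta> (Lk 1 v)
    else M n \<beta> (Lk (Suc a) v) - (Delta (a - 1) / Delta a) * M n \<beta> (epa v a))"
proof (cases "a = 0")
  case False
  have "epa v (Suc a) = (\<lambda>x. Lk (Suc a) v x - (Delta (a - 1) / Delta a) * epa v a x)" using False by simp
  then show ?thesis using False M_lin[of n \<beta> "Lk (Suc a) v" "Delta (a - 1) / Delta a" "epa v a"] by simp
qed simp

lemma M_epa_0: "M n \<beta> (epa v 0) = 0"
  by (simp add: M_zero)

declare epa.simps[simp del]

context
  fixes n' h :: nat and \<beta> :: "nat list" and v :: vec and m :: nat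
  assumes IH: "\<And>\<beta>' m'. invd n' \<beta>' \<Longrightarrow> 1 \<le> m' \<Longrightarrow> partner \<beta>' m' = m' + 1 \<Longrightarrow> m' < h \<Longrightarrow> M n' \<beta>' v = 0"
    and ivb: "invd (Suc n') \<beta>" and n1: "1 \<le> n'" and m1: "1 \<le> m" and arc: "partner \<beta> m = m + 1"
    and m2: "m + 1 \<le> 2 * Suc n'"
begin

lemma Z1: "i + 2 \<le> m \<Longrightarrow> m - 2 < h \<Longrightarrow> M (Suc n') \<beta> (epa v i) = 0"
proof (induction i)
  case 0
  then show ?case by (simp add: M_epa_0)
next
  case (Suc a)
  have i2: "Suc a + 1 \<le> 2 * Suc n'" using Suc.prems m2 by simp
  have cv: "invd n' (capd (Suc a) \<beta>)" using capd_invd[OF ivb _ i2] by simp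
  have ca: "partner (capd (Suc a) \<beta>) (m-2) = m-2+1"
    using capd_low[OF ivb m1 _ arc, of "Suc a"] m2 Suc.prems by simp
  have "M n' (capd (Suc a) \<beta>) v = 0" using IH[OF cv _ ca] Suc.prems by simp
  then have x: "M (Suc n') \<beta> (Lk (Suc a) v) = 0" using M_Lk[OF ivb _ _ i2] by simp
  have y: "M (Suc n') \<beta> (epa v a) = 0" using Suc by simp
  show ?case using x y by (cases "a = 0") (simp_all add: M_epa_Suc)
qed

lemma Z2: "m + 1 \<le> i \<Longrightarrow> i \<le> k \<Longrightarrow> k \<le> h + 1 \<Longrightarrow> h \<le> n' \<Longrightarrow> m < k \<Longrightarrow>
   M (Suc n') \<beta> (epa v (m+1)) = 0 \<Longrightarrow> M (Suc n') \<beta> (epa v i) = 0"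
proof (induction i rule: dec_induct)
  case base
  then show ?case by simp
next
  case (step a)
  have i2: "Suc a + 1 \<le> 2 * Suc n'" using step by simp
  have cv: "invd n' (capd (Suc a) \<beta>)" using capd_invd[OF ivb _ i2] by simp
  have ca: "partner (capd (Suc a) \<beta>) m = m+1"
    using capd_high[OF ivb m1 m2 arc, of "Suc a"] i2 step by simp
  have "M n' (capd (Suc a) \<beta>) v = 0" using IH[OF cv m1 ca] step by simp
  then have x: "M (Suc n') \<beta> (Lk (Suc a) v) = 0" using M_Lk[OF ivb _ _ i2] by simp
  have y: "M (Suc n') \<beta> (epa v a) = 0" using step by simp
  have "a \<noteq> 0" using step m1 by simp
  then show ?case using x y by (simp add: M_epa_Suc)
qed

lemma Zmid: assumes "m < k" "k \<le> h + 1" "h \<le> n'"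
  shows "M (Suc n') \<beta> (epa v (m+1)) = 0"
proof -
  have m3: "m + 2 \<le> 2 * Suc n'" using assms by simp
  have i2: "m + 1 \<le> 2 * Suc n'" using m2 .
  define X where "X = M n' (capd m \<beta>) v"
  have xm: "M (Suc n') \<beta> (Lk m v) = qq * X" using M_Lk[OF ivb _ m1 i2] arc by (simp add: X_def)
  have arc2': "partner \<beta> (m+1) = m" using arc2[OF ivb m1 m2 arc] .
  have xm1: "M (Suc n') \<beta> (Lk (m+1) v) = X" using M_Lk[OF ivb _ _ , of "m+1" v] m3 arc2' capd_mid2[OF ivb m1 m2 arc m3]
    by (simp add: X_def)
  show ?thesis
  proof (cases "m = 1")
    case True
    have y1: "M (Suc n') \<beta> (epa v (Suc 0)) = qq * X" using xm True M_epa_Suc[of "Suc n'" \<beta> v 0] by simp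
    have "M (Suc n') \<beta> (epa v (Suc (Suc 0))) = X - (Delta 0 / Delta 1) * (qq * X)"
      using xm1 y1 True M_epa_Suc[of "Suc n'" \<beta> v "Suc 0"] by simp
    moreover have "m + 1 = Suc (Suc 0)" using True by simp
    ultimately show ?thesis using qq_nz by simp
  next
    case False
    then have m2': "2 \<le> m" using m1 by simp
    have ym2: "M (Suc n') \<beta> (epa v (m-2)) = 0" using Z1[of "m-2"] m2' assms by simp
    have r: "m - 1 \<in> {1..2 * Suc n'}" using m2' m2 by auto
    have pm1: "partner \<beta> (m-1) \<noteq> m"
    proof
      assume "partner \<beta> (m-1) = m"
      then have "m - 1 = m + 1" using Pinj[OF ivb m1 m2 arc r] by simp
      then show False by simp
    qed
    have xm0: "M (Suc n') \<beta> (Lk (m-1) v) = X"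
      using M_Lk[OF ivb _ _ , of "m-1" v] m2' m2 pm1 capd_mid1[OF ivb m1 m2 arc m2'] by (simp add: X_def)
    have ym1: "M (Suc n') \<beta> (epa v (m-1)) = X"
    proof -
      obtain a where a: "m - 1 = Suc a" using m2' by (cases "m - 1") auto
      show ?thesis using M_epa_Suc[of "Suc n'" \<beta> v a] a xm0 ym2
      proof (cases "a = 0")
        case True then show ?thesis using M_epa_Suc[of "Suc n'" \<beta> v a] a xm0 by simp
      next
        case False
        have "m - 2 = a" using a by simp
        then show ?thesis using M_epa_Suc[of "Suc n'" \<beta> v a] a xm0 ym2 False by simp
      qed
    qed
    have ym: "M (Suc n') \<beta> (epa v m) = qq * X - (Delta (m-2) / Delta (m-1)) * X"
    proof -
      have "m = Suc (m-1)" "m - 1 \<noteq> 0" "m - 1 - 1 = m - 2" using m2' by auto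
      then show ?thesis using M_epa_Suc[of "Suc n'" \<beta> v "m-1"] xm ym1 by simp
    qed
    have ym3: "M (Suc n') \<beta> (epa v (m+1)) = X - (Delta (m-1) / Delta m) * (qq * X - (Delta (m-2) / Delta (m-1)) * X)"
      using M_epa_Suc[of "Suc n'" \<beta> v m] xm1 ym m1 by simp
    have D: "Delta m = qq * Delta (m-1) - Delta (m-2)"
    proof -
      obtain c where c: "m = Suc (Suc c)" using m2' by (metis add_2_eq_Suc le_Suc_ex)
      then show ?thesis by simp
    qed
    show ?thesis using ym3 D Delta_nz[of m] Delta_nz[of "m-1"]
      by (simp add: field_simps)
  qed
qed

end


fun valid :: "nat list \<Rightarrow> bool" where
  "valid [] = False"
| "valid [x] = (x = 1)"
| "valid (k # x # r) = (k \<le> x + 1 \<and> valid (x # r))"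

lemma valid_hd: "valid s \<Longrightarrow> hd s \<le> length s"
  by (induction s rule: valid.induct) auto

theorem G: "valid s \<Longrightarrow> length s = n \<Longrightarrow> invd n \<beta> \<Longrightarrow> 1 \<le> m \<Longrightarrow> partner \<beta> m = m + 1 \<Longrightarrow> m < hd s
   \<Longrightarrow> M n \<beta> (ep s) = 0"
proof (induction s arbitrary: n \<beta> m rule: valid.induct)
  case 1 then show ?case by simp
next
  case (2 x) then show ?case by simp
next
  case (3 k x r)
  define n' where "n' = length (x # r)"
  have n: "n = Suc n'" using 3 by (simp add: n'_def)
  have n1: "1 \<le> n'" by (simp add: n'_def)
  have vx: "valid (x # r)" and kx: "k \<le> x + 1" using 3 by auto
  have xh: "x \<le> n'" using valid_hd[OF vx] by (simp add: n'_def)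
  have IH: "\<And>\<beta>' m'. invd n' \<beta>' \<Longrightarrow> 1 \<le> m' \<Longrightarrow> partner \<beta>' m' = m' + 1 \<Longrightarrow> m' < x \<Longrightarrow> M n' \<beta>' (ep (x # r)) = 0"
    using 3(1) vx by (simp add: n'_def)
  have ivb: "invd (Suc n') \<beta>" using 3 n by simp
  have mk: "m < k" using 3 by simp
  have m1: "1 \<le> m" and arc: "partner \<beta> m = m + 1" using 3 by auto
  have m2: "m + 1 \<le> 2 * Suc n'" using mk kx xh by simp
  have mid: "M (Suc n') \<beta> (epa (ep (x # r)) (m+1)) = 0"
    using Zmid[OF IH ivb n1 m1 arc m2 mk kx xh] .
  have "M (Suc n') \<beta> (epa (ep (x # r)) k) = 0"
    using Z2[OF IH ivb n1 m1 arc m2, where i = k and k = k] mk kx xh mid by simp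
  then show ?case using n by simp
qed


lemma inner_arc:
  assumes d: "d \<in> D n"
  shows "a \<in> {1..2*n} \<Longrightarrow> a < partner d a \<Longrightarrow> \<exists>k. a \<le> k \<and> k + 1 \<le> partner d a \<and> partner d k = k + 1"
proof (induction "partner d a - a" arbitrary: a rule: less_induct)
  case less
  have iv: "invd n d" using D_invd[OF d] .
  have Pa: "partner d a \<in> {1..2*n}" "partner d (partner d a) = a" using invdD[OF iv less.prems(1)] by auto
  show ?case
  proof (cases "partner d a = a + 1")
    case True then show ?thesis by auto
  next
    case False
    define b where "b = a + 1"
    have b: "b \<in> {1..2*n}" using False less.prems Pa by (auto simp: b_def)
    have Pb: "partner d b \<in> {1..2*n}" "partner d b \<noteq> b" "partner d (partner d b) = b" using invdD[OF iv b] by auto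
    have "partner d b \<noteq> a" using Pb(3) False b_def by auto
    moreover have "partner d b \<noteq> partner d a" using Pb(3) Pa(2) b_def by (metis n_not_Suc_n Suc_eq_plus1)
    moreover have "\<not> partner d b < a"
    proof
      assume h: "partner d b < a"
      show False using D_ncr[OF d Pb(1) less.prems(1) h] Pb(3) b_def False less.prems(2) by auto
    qed
    moreover have "\<not> partner d b > partner d a"
    proof
      assume h: "partner d b > partner d a"
      have "b < partner d a" using False less.prems(2) b_def by auto
      then show False using D_ncr[OF d less.prems(1) b] h b_def by auto
    qed
    ultimately have r: "b < partner d b" "partner d b < partner d a" using Pb(2) b_def by auto
    have "partner d b - b < partner d a - a" using r b_def by auto
    then obtain k where "b \<le> k" "k + 1 \<le> partner d b" "partner d k = k + 1" using less.hyps[OF _ b r(1)] by blast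
    then show ?thesis using r b_def by (intro exI[of _ k]) auto
  qed
qed

definition fpos :: "nat list \<Rightarrow> nat" where
  "fpos d = (LEAST k. 1 \<le> k \<and> partner d k = k + 1)"

lemma fpos_props:
  assumes d: "d \<in> D n" and n: "1 \<le> n"
  shows "1 \<le> fpos d" "partner d (fpos d) = fpos d + 1" "fpos d + 1 \<le> 2*n"
    "\<And>k. 1 \<le> k \<Longrightarrow> k < fpos d \<Longrightarrow> partner d k \<noteq> k + 1"
proof -
  have iv: "invd n d" using D_invd[OF d] .
  have one: "1 \<in> {1..2*n}" using n by auto
  have "1 < partner d 1" using invdD[OF iv one] by auto
  then obtain k where k: "1 \<le> k" "k + 1 \<le> partner d 1" "partner d k = k + 1" using inner_arc[OF d one] by auto
  have kr: "k + 1 \<le> 2*n" using k invdD[OF iv one] by auto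
  have P: "1 \<le> fpos d \<and> partner d (fpos d) = fpos d + 1" unfolding fpos_def by (rule LeastI[of _ k]) (use k in auto)
  then show "1 \<le> fpos d" "partner d (fpos d) = fpos d + 1" by auto
  have "fpos d \<le> k" unfolding fpos_def by (rule Least_le) (use k in auto)
  then show "fpos d + 1 \<le> 2*n" using kr by auto
  show "\<And>j. 1 \<le> j \<Longrightarrow> j < fpos d \<Longrightarrow> partner d j \<noteq> j + 1"
    unfolding fpos_def using not_less_Least by blast
qed

lemma remarc_capd:
  assumes iv: "invd n d" and k1: "1 \<le> k" and k2: "k + 1 \<le> 2*n" and arc: "partner d k = k + 1"
  shows "remarc k d = capd k d"
proof -
  have arc2: "partner d (k+1) = k"
  proof -
    have "partner d (partner d k) = k" using invdD[OF iv, of k] k1 k2 by auto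
    then show ?thesis using arc by simp
  qed
  have L: "length d = 2*n" using iv by (simp add: invd_def)
  show ?thesis unfolding remarc_def capd_def
  proof (rule map_cong[OF refl])
    fix j assume "j \<in> set [1..<length d - 1]"
    then have j: "1 \<le> j" "j + 2 \<le> 2*n" using L by auto
    define z where "z = shift k j"
    have z: "z \<in> {1..2*n}" "z \<noteq> k" "z \<noteq> k+1" using shift_range[of j "2*n" k] j by (auto simp: z_def)
    have Pz: "partner d (partner d z) = z" using invdD[OF iv z(1)] by auto
    have "partner d z \<noteq> k" using Pz arc z by auto
    moreover have "partner d z \<noteq> k + 1" using Pz arc2 z by auto
    ultimately show "unshift k (partner d (shift k j)) = unshift k (cq k d (shift k j))"
      by (simp add: cq_def z_def[symmetric])
  qed
qed

lemma remarc_D: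
  assumes d: "d \<in> D n" and k1: "1 \<le> k" and k2: "k + 1 \<le> 2*n" and arc: "partner d k = k + 1"
  shows "remarc k d \<in> D (n-1)"
proof -
  have iv: "invd n d" using D_invd[OF d] .
  have rc: "remarc k d = capd k d" using remarc_capd[OF iv k1 k2 arc] .
  have ivc: "invd (n-1) (remarc k d)" using capd_invd[OF iv k1 k2] rc by simp
  have L: "length d = 2*n" using iv by (simp add: invd_def)
  have arc2: "partner d (k+1) = k"
  proof -
    have "partner d (partner d k) = k" using invdD[OF iv, of k] k1 k2 by auto
    then show ?thesis using arc by simp
  qed
  have pr: "shift k (partner (remarc k d) x) = partner d (shift k x)" if x: "x \<in> {1..2*(n-1)}" for x
  proof -
    have xr: "x + 2 \<le> 2*n" "1 \<le> x" using x k2 by auto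
    define z where "z = shift k x"
    have z: "z \<in> {1..2*n}" "z \<noteq> k" "z \<noteq> k+1" using shift_range[of x "2*n" k] xr by (auto simp: z_def)
    have Pz: "partner d (partner d z) = z" using invdD[OF iv z(1)] by auto
    have "partner d z \<noteq> k" using Pz arc z by auto
    moreover have "partner d z \<noteq> k + 1" using Pz arc2 z by auto
    moreover have "partner (remarc k d) x = unshift k (cq k d z)"
      using xr L rc partner_capd[of x d k] by (simp add: z_def)
    ultimately show ?thesis by (simp add: shift_unshift z_def cq_def)
  qed
  { fix a b assume a: "a \<in> {1..2*(n-1)}" and b: "b \<in> {1..2*(n-1)}"
      and c: "a < b" "b < partner (remarc k d) a" "partner (remarc k d) a < partner (remarc k d) b"
    have sa: "shift k a \<in> {1..2*n}" "shift k b \<in> {1..2*n}" using shift_range[of _ "2*n" k] a b k2 by auto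
    have "shift k a < shift k b" using c by simp
    moreover have "shift k b < partner d (shift k a)" using c(2) pr[OF a] by (metis shift_less_iff)
    moreover have "partner d (shift k a) < partner d (shift k b)" using c(3) pr[OF a] pr[OF b] by (metis shift_less_iff)
    ultimately have False using D_ncr[OF d sa] by auto }
  then show ?thesis using ivc by (auto simp: D_iff)
qed


lemma remarc_pr:
  assumes iv: "invd n d" and k1: "1 \<le> k" and k2: "k + 1 \<le> 2*n" and arc: "partner d k = k + 1"
    and x: "x \<in> {1..2*(n-1)}"
  shows "shift k (partner (remarc k d) x) = partner d (shift k x)"
proof -
  have rc: "remarc k d = capd k d" using remarc_capd[OF iv k1 k2 arc] .
  have L: "length d = 2*n" using iv by (simp add: invd_def)
  have arc2: "partner d (k+1) = k"
  proof -
    have "partner d (partner d k) = k" using invdD[OF iv, of k] k1 k2 by auto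
    then show ?thesis using arc by simp
  qed
  have xr: "x + 2 \<le> 2*n" "1 \<le> x" using x k2 by auto
  define z where "z = shift k x"
  have z: "z \<in> {1..2*n}" "z \<noteq> k" "z \<noteq> k+1" using shift_range[of x "2*n" k] xr by (auto simp: z_def)
  have Pz: "partner d (partner d z) = z" using invdD[OF iv z(1)] by auto
  have "partner d z \<noteq> k" using Pz arc z by auto
  moreover have "partner d z \<noteq> k + 1" using Pz arc2 z by auto
  moreover have "partner (remarc k d) x = unshift k (cq k d z)"
    using xr L rc partner_capd[of x d k] by (simp add: z_def)
  ultimately show ?thesis by (simp add: shift_unshift z_def cq_def)
qed

lemma lk_remarc:
  assumes iv: "invd n d" and k1: "1 \<le> k" and k2: "k + 1 \<le> 2*n" and arc: "partner d k = k + 1"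
  shows "lk k (remarc k d) = d"
proof (rule list_eq_partner)
  have L: "length d = 2*n" using iv by (simp add: invd_def)
  have Lr: "length (remarc k d) = 2*n - 2" using L by (simp add: remarc_def)
  show "length (lk k (remarc k d)) = length d" using L Lr k2 k1 by simp
  have arc2: "partner d (k+1) = k"
  proof -
    have "partner d (partner d k) = k" using invdD[OF iv, of k] k1 k2 by auto
    then show ?thesis using arc by simp
  qed
  fix x assume x: "1 \<le> x" "x \<le> length (lk k (remarc k d))"
  then have x2: "x \<le> 2*n" using L Lr k2 k1 by simp
  show "partner (lk k (remarc k d)) x = partner d x"
  proof (cases "x = k \<or> x = k + 1")
    case True
    then show ?thesis using x x2 Lr k2 arc arc2 by (auto simp: partner_lk)
  next
    case False
    have u: "unshift k x \<in> {1..2*(n-1)}" using unshift_range[of x "2*n" k] x x2 False k1 k2 by auto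
    have "partner (lk k (remarc k d)) x = shift k (partner (remarc k d) (unshift k x))"
      using x x2 Lr k2 False by (simp add: partner_lk)
    also have "\<dots> = partner d (shift k (unshift k x))" using remarc_pr[OF iv k1 k2 arc u] .
    also have "\<dots> = partner d x" using False by (simp add: shift_unshift)
    finally show ?thesis .
  qed
qed

lemma rseq_aux_Suc: "rseq_aux (Suc m) d = fpos d # rseq_aux m (remarc (fpos d) d)"
  by (simp add: fpos_def Let_def)

lemma length_rseq_aux[simp]: "length (rseq_aux m d) = m"
  by (induction m arbitrary: d) (simp_all add: Let_def)

lemma rseq_eq: "d \<in> D n \<Longrightarrow> rseq d = rseq_aux n d"
  using D_invd[of d n] by (simp add: rseq_def invd_def)

lemma rseq_inj: "d1 \<in> D n \<Longrightarrow> d2 \<in> D n \<Longrightarrow> rseq_aux n d1 = rseq_aux n d2 \<Longrightarrow> d1 = d2"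
proof (induction n arbitrary: d1 d2)
  case 0
  then show ?case using D_invd[of d1 0] D_invd[of d2 0] by (simp add: invd_def)
next
  case (Suc n)
  have H: "fpos d1 # rseq_aux n (remarc (fpos d1) d1) = fpos d2 # rseq_aux n (remarc (fpos d2) d2)"
    using Suc.prems(3) unfolding rseq_aux_Suc .
  have f: "fpos d1 = fpos d2" using H by (metis list.inject)
  have t: "rseq_aux n (remarc (fpos d1) d1) = rseq_aux n (remarc (fpos d2) d2)" using H by (metis list.inject)
  note p1 = fpos_props[OF Suc.prems(1)] and p2 = fpos_props[OF Suc.prems(2)]
  have r1: "remarc (fpos d1) d1 \<in> D n" using remarc_D[OF Suc.prems(1) p1(1) p1(3) p1(2)] by simp
  have r2: "remarc (fpos d2) d2 \<in> D n" using remarc_D[OF Suc.prems(2) p2(1) p2(3) p2(2)] by simp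
  have "remarc (fpos d1) d1 = remarc (fpos d2) d2" using Suc.IH[OF r1 r2 t] .
  then have "lk (fpos d1) (remarc (fpos d1) d1) = lk (fpos d2) (remarc (fpos d2) d2)" using f by simp
  then show ?case
    using lk_remarc[OF D_invd[OF Suc.prems(1)] p1(1) p1(3) p1(2)] lk_remarc[OF D_invd[OF Suc.prems(2)] p2(1) p2(3) p2(2)]
    by simp
qed

lemma fpos_remarc:
  assumes d: "d \<in> D (Suc (Suc n))"
  shows "fpos d \<le> fpos (remarc (fpos d) d) + 1"
proof -
  note p = fpos_props[OF d]
  define k where "k = fpos d"
  have r: "remarc k d \<in> D (Suc n)" using remarc_D[OF d p(1) p(3) p(2)] by (simp add: k_def)
  note q = fpos_props[OF r]
  define k' where "k' = fpos (remarc k d)"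
  have iv: "invd (Suc (Suc n)) d" using D_invd[OF d] .
  show ?thesis
  proof (rule ccontr)
    assume "\<not> ?thesis"
    then have lt: "k' + 1 < k" by (simp add: k_def k'_def)
    have k'r: "k' \<in> {1..2*(Suc (Suc n) - 1)}" using q(1) q(3) by (auto simp: k'_def)
    have "shift k (partner (remarc k d) k') = partner d (shift k k')"
      using remarc_pr[OF iv p(1) p(3) p(2) _] k'r by (simp add: k_def)
    moreover have "shift k k' = k'" using lt by (simp add: shift_def)
    moreover have "partner (remarc k d) k' = k' + 1" using q(2) by (simp add: k'_def)
    moreover have "shift k (k' + 1) = k' + 1" using lt by (simp add: shift_def)
    ultimately have "partner d k' = k' + 1" by simp
    then show False using p(4)[of k'] q(1) lt by (simp add: k_def k'_def)
  qed
qed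

lemma rseq_valid: "d \<in> D (Suc n) \<Longrightarrow> valid (rseq_aux (Suc n) d)"
proof (induction n arbitrary: d)
  case 0
  have iv: "invd 1 d" using D_invd[OF 0] by simp
  have "partner d 1 \<in> {1..2} \<and> partner d 1 \<noteq> 1" using invdD[OF iv, of 1] by auto
  then have "partner d 1 = 2" by auto
  then have "fpos d = 1" unfolding fpos_def by (intro Least_equality) auto
  then show ?case unfolding rseq_aux_Suc by simp
next
  case (Suc n)
  note p = fpos_props[OF Suc.prems]
  have r: "remarc (fpos d) d \<in> D (Suc n)" using remarc_D[OF Suc.prems p(1) p(3) p(2)] by simp
  have v: "valid (rseq_aux (Suc n) (remarc (fpos d) d))" using Suc.IH[OF r] .
  have "fpos d \<le> fpos (remarc (fpos d) d) + 1" using fpos_remarc[OF Suc.prems] .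
  then show ?case using v unfolding rseq_aux_Suc by simp
qed


theorem mainTheorem12:
  fixes n j :: nat and b a :: "nat list"
  assumes "n \<ge> 2"
    and "length b = n" and "restricted n b"
    and "length a = n - 1" and "restricted (n - 1) a"
    and "1 \<le> j" and "j \<le> hd b - 2" and "hd b - 2 < hd a"
  shows "markov n (ind (e b)) (ep (j # a)) = 0"
proof -
  obtain n' where n': "n = Suc n'" using assms(1) by (cases n) auto
  have n1: "1 \<le> n'" using assms(1) n' by simp
  obtain d where d: "d \<in> D n" "rseq d = b" using assms(3) by (auto simp: restricted_def)
  have eb: "e b = d" unfolding e_def
  proof (rule the_equality)
    show "d \<in> D (length b) \<and> rseq d = b" using d assms(2) by simp
    fix d' assume "d' \<in> D (length b) \<and> rseq d' = b"
    then have "d' \<in> D n" "rseq d' = b" using assms(2) by auto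
    then have "d' \<in> D n" "rseq_aux n d' = rseq_aux n d" using rseq_eq[of d' n] rseq_eq[OF d(1)] d(2) by auto
    then show "d' = d" using rseq_inj[of d' n d] d(1) by blast
  qed
  have "b = rseq_aux (Suc n') d" using d rseq_eq[OF d(1)] n' by simp
  then have hb: "hd b = fpos d" unfolding rseq_aux_Suc by simp
  have n0: "1 \<le> n" using assms(1) by simp
  note p = fpos_props[OF d(1) n0]
  obtain d2 where d2: "d2 \<in> D (n-1)" "rseq d2 = a" using assms(5) by (auto simp: restricted_def)
  obtain n'' where n'': "n - 1 = Suc n''" using n1 n' by (cases n') auto
  have va: "valid a" using rseq_valid[of d2 n''] d2 rseq_eq[OF d2(1)] n'' by simp
  obtain x r where a: "a = x # r" using assms(4) n' n1 by (cases a) auto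
  have epj: "ep (j # a) = epa (ep a) j" using a by simp
  have IH: "\<And>\<beta>' m'. invd n' \<beta>' \<Longrightarrow> 1 \<le> m' \<Longrightarrow> partner \<beta>' m' = m' + 1 \<Longrightarrow> m' < hd a \<Longrightarrow> M n' \<beta>' (ep a) = 0"
    using G[OF va] assms(4) n' by simp
  have ivb: "invd (Suc n') d" using D_invd[OF d(1)] n' by simp
  have m2: "fpos d + 1 \<le> 2 * Suc n'" using p n' by simp
  have "M (Suc n') d (epa (ep a) j) = 0"
  proof (rule Z1[where n'=n' and h="hd a" and \<beta>=d and v="ep a" and m="fpos d" and i=j])
    fix \<beta>' m' assume "invd n' \<beta>'" "1 \<le> m'" "partner \<beta>' m' = m' + 1" "m' < hd a"
    then show "M n' \<beta>' (ep a) = 0" by (rule IH)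
  qed (use ivb n1 p m2 assms(6-8) hb in auto)
  then show ?thesis using markov_ind[OF d(1)] eb epj n' by simp
qed

end
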